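(* Let $U$ be a set of tokens, let $\phi$ be drawn from an LSH family on $U$, and for $x,y\in U$ let $\zeta(x,y)=\Pr(\phi(x)=\phi(y))$. Let $m,\eta,L\in\mathbf{N}$. Consider a standard partitioned Bloom filter of total range $m$ with $\eta$ independent hash repetitions, where the $j$-th repetition uses its own block of range $m/\eta$ and the IDL hash function $\psi_j(x)=\rho_1^{(j)}(\phi_j(x))+\rho_2^{(j)}(x)$, with $\phi_j$ an independent copy of the LSH function $\phi$, $\rho_1^{(j)}$ a random hash function with range $[m/\eta]$, and $\rho_2^{(j)}$ a random hash function with range $[L]$ (all drawn independently). Suppose the filter is built by inserting a sequence of tokens $x_1,\dots,x_n\in U$, and let $q\in U$ be a query token not among the inserted tokens. Assume: (A1) there is $w_1\in\mathbf{N}$ such that $\zeta(x_i,x_j)=0$ whenever $|i-j|\ge w_1$; (A2) $|\{x_i : \zeta(q,x_i)>0\}|\le w_2$. Then the false positive rate $\epsilon$ for $q$ (the probability that all $\eta$ bits queried for $q$ are set) satisfies $$\epsilon\le\left(w_2\left(\frac{1}{L}+\frac{\eta}{m}\right)+2\left(1-\left(1-\frac{w_1\eta}{m}\right)^{\frac{n}{2w_1}}\right)\right)^{\eta}\approx\left(w_2\left(\frac{1}{L}+\frac{\eta}{m}\right)+2\left(1-e^{-\frac{\eta n}{2m}}\right)\right)^{\eta}.$$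
   Context: $[m]=\{0,\dots,m-1\}$. A random hash function with range $[r]$ maps keys (pairwise) independently and uniformly into $[r]$. A Bloom filter is a bit array, initially all zeros; inserting a token sets the bits at the locations given by each of the $\eta$ hash functions to 1; a query token is reported present iff all its $\eta$ hashed bits are 1. In a partitioned Bloom filter of total range $m$, the array is split into $\eta$ blocks of size $m/\eta$ and the $j$-th hash function addresses only the $j$-th block. A false positive occurs when a token that was not inserted is reported present. *)

theory Defs
  imports "HOL-Probability.Probability"
begin

definition zeta :: "('u \<Rightarrow> 'h) pmf \<Rightarrow> 'u \<Rightarrow> 'u \<Rightarrow> real" where
  "zeta Phi x y = measure_pmf.prob Phi {\<phi>. \<phi> x = \<phi> y}"

definition idl_hash :: "nat \<Rightarrow> ('u \<Rightarrow> 'h) \<times> ('h \<Rightarrow> nat) \<times> ('u \<Rightarrow> nat) \<Rightarrow> 'u \<Rightarrow> nat" where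
  "idl_hash b h x = (case h of (\<phi>, \<rho>1, \<rho>2) \<Rightarrow> (\<rho>1 (\<phi> x) + \<rho>2 x) mod b)"

text \<open>The random functions are sampled on the relevant
  (finite) key set S of tokens, resp. on phi ` S; this has the same distribution on those keys
  as a fully random function.\<close>
definition idl_rep_pmf ::
  "('u \<Rightarrow> 'h) pmf \<Rightarrow> nat \<Rightarrow> nat \<Rightarrow> 'u set \<Rightarrow> (('u \<Rightarrow> 'h) \<times> ('h \<Rightarrow> nat) \<times> ('u \<Rightarrow> nat)) pmf" where
  "idl_rep_pmf Phi b L S =
     do { \<phi> \<leftarrow> Phi;
          \<rho>1 \<leftarrow> Pi_pmf (\<phi> ` S) 0 (\<lambda>_. pmf_of_set {..<b});
          \<rho>2 \<leftarrow> Pi_pmf S 0 (\<lambda>_. pmf_of_set {..<L});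
          return_pmf (\<phi>, \<rho>1, \<rho>2) }"

definition idl_filter_pmf ::
  "('u \<Rightarrow> 'h) pmf \<Rightarrow> nat \<Rightarrow> nat \<Rightarrow> nat \<Rightarrow> 'u set \<Rightarrow>
     (nat \<Rightarrow> ('u \<Rightarrow> 'h) \<times> ('h \<Rightarrow> nat) \<times> ('u \<Rightarrow> nat)) pmf" where
  "idl_filter_pmf Phi m \<eta> L S = Pi_pmf {..<\<eta>} undefined (\<lambda>_. idl_rep_pmf Phi (m div \<eta>) L S)"

definition bloom_bits ::
  "nat \<Rightarrow> nat \<Rightarrow> (nat \<Rightarrow> ('u \<Rightarrow> 'h) \<times> ('h \<Rightarrow> nat) \<times> ('u \<Rightarrow> nat)) \<Rightarrow> 'u list \<Rightarrow> (nat \<times> nat) set" where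
  "bloom_bits m \<eta> hs xs = {(j, idl_hash (m div \<eta>) (hs j) x) | j x. j < \<eta> \<and> x \<in> set xs}"

definition bloom_query ::
  "nat \<Rightarrow> nat \<Rightarrow> (nat \<Rightarrow> ('u \<Rightarrow> 'h) \<times> ('h \<Rightarrow> nat) \<times> ('u \<Rightarrow> nat)) \<Rightarrow> 'u list \<Rightarrow> 'u \<Rightarrow> bool" where
  "bloom_query m \<eta> hs xs q = (\<forall>j<\<eta>. (j, idl_hash (m div \<eta>) (hs j) q) \<in> bloom_bits m \<eta> hs xs)"

definition idl_fp_rate :: "('u \<Rightarrow> 'h) pmf \<Rightarrow> nat \<Rightarrow> nat \<Rightarrow> nat \<Rightarrow> 'u list \<Rightarrow> 'u \<Rightarrow> real" where
  "idl_fp_rate Phi m \<eta> L xs q =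
     measure_pmf.prob (idl_filter_pmf Phi m \<eta> L (insert q (set xs))) {hs. bloom_query m \<eta> hs xs q}"

end

theory Submission
  imports Defs
begin
lemma prob_bind_le:
  assumes "\<And>x. x \<in> set_pmf p \<Longrightarrow> measure_pmf.prob (f x) A \<le> c"
  shows "measure_pmf.prob (bind_pmf p f) A \<le> c"
proof -
  obtain x0 where x0: "x0 \<in> set_pmf p" using set_pmf_not_empty[of p] by blast
  have c0: "0 \<le> c" using assms[OF x0] measure_nonneg order_trans by blast
  have "emeasure (measure_pmf (bind_pmf p f)) A = (\<integral>\<^sup>+x. emeasure (measure_pmf (f x)) A \<partial>measure_pmf p)"
    by simp
  also have "\<dots> \<le> (\<integral>\<^sup>+x. ennreal c \<partial>measure_pmf p)"
    by (intro nn_integral_mono_AE) (auto simp: AE_measure_pmf_iff measure_pmf.emeasure_eq_measure assms intro!: ennreal_leI)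
  also have "\<dots> = ennreal c" by (simp add: measure_pmf.emeasure_space_1)
  finally show ?thesis using c0 by (simp add: measure_pmf.emeasure_eq_measure)
qed

lemma Pi_split_le:
  assumes "finite A" "a \<in> A"
    and "\<And>y. y \<in> set_pmf (p a) \<Longrightarrow> measure_pmf.prob (Pi_pmf (A - {a}) d p) {g. g(a:=y) \<in> X} \<le> c"
  shows "measure_pmf.prob (Pi_pmf A d p) X \<le> c"
proof -
  have A: "A = insert a (A - {a})" using assms by blast
  have "Pi_pmf A d p = do {y \<leftarrow> p a; f \<leftarrow> Pi_pmf (A - {a}) d p; return_pmf (f(a := y))}"
    by (subst A, rule Pi_pmf_insert') (use assms in auto)
  also have "\<dots> = do {y \<leftarrow> p a; map_pmf (\<lambda>f. f(a := y)) (Pi_pmf (A - {a}) d p)}"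
    by (simp add: map_pmf_def)
  finally have eq: "Pi_pmf A d p = \<dots>" .
  show ?thesis unfolding eq
    by (rule prob_bind_le) (use assms(3) in \<open>auto simp: vimage_def\<close>)
qed

lemma Pi_split_le2:
  assumes "finite A" "a \<in> A"
    and "\<And>g. measure_pmf.prob (p a) {y. g(a:=y) \<in> X} \<le> c"
  shows "measure_pmf.prob (Pi_pmf A d p) X \<le> c"
proof -
  have A: "A = insert a (A - {a})" using assms by blast
  have "Pi_pmf A d p = do {y \<leftarrow> p a; f \<leftarrow> Pi_pmf (A - {a}) d p; return_pmf (f(a := y))}"
    by (subst A, rule Pi_pmf_insert') (use assms in auto)
  also have "\<dots> = do {f \<leftarrow> Pi_pmf (A - {a}) d p; y \<leftarrow> p a; return_pmf (f(a := y))}"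
    by (rule bind_commute_pmf)
  also have "\<dots> = do {f \<leftarrow> Pi_pmf (A - {a}) d p; map_pmf (\<lambda>y. f(a := y)) (p a)}"
    by (simp add: map_pmf_def)
  finally have eq: "Pi_pmf A d p = \<dots>" .
  show ?thesis unfolding eq
    by (rule prob_bind_le) (use assms(3) in \<open>auto simp: vimage_def\<close>)
qed

lemma mod_cancel_nat: "((c::nat) + y1) mod b = (c + y2) mod b \<Longrightarrow> y1 mod b = y2 mod b"
proof -
  assume h: "((c::nat) + y1) mod b = (c + y2) mod b"
  show ?thesis
  proof (cases "y1 \<le> y2")
    case True
    then have "b dvd (c + y2) - (c + y1)" using h mod_eq_dvd_iff_nat[of "c + y1" "c + y2" b] by simp
    then show ?thesis using True mod_eq_dvd_iff_nat[of y1 y2 b] by simp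
  next
    case False
    then have "b dvd (c + y1) - (c + y2)" using h mod_eq_dvd_iff_nat[of "c + y2" "c + y1" b] by simp
    then show ?thesis using False mod_eq_dvd_iff_nat[of y2 y1 b] by simp
  qed
qed

lemma count_le: "card {y::nat. y < L \<and> (c + y) mod b = e} \<le> L div b + 1"
proof -
  have "inj_on (\<lambda>y. y div b) {y::nat. y < L \<and> (c + y) mod b = e}"
  proof (rule inj_onI)
    fix y1 y2 assume a: "y1 \<in> {y. y < L \<and> (c + y) mod b = e}" "y2 \<in> {y. y < L \<and> (c + y) mod b = e}"
      "y1 div b = y2 div b"
    then have m: "y1 mod b = y2 mod b" using mod_cancel_nat[of c y1 b y2] by simp
    have "y1 = y1 div b * b + y1 mod b" by (rule div_mult_mod_eq[symmetric])
    also have "\<dots> = y2 div b * b + y2 mod b" using a(3) m by simp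
    also have "\<dots> = y2" by (rule div_mult_mod_eq)
    finally show "y1 = y2" .
  qed
  moreover have "(\<lambda>y. y div b) ` {y::nat. y < L \<and> (c + y) mod b = e} \<subseteq> {..L div b}"
  proof
    fix z assume "z \<in> (\<lambda>y. y div b) ` {y::nat. y < L \<and> (c + y) mod b = e}"
    then obtain y where "y < L" "z = y div b" by blast
    then show "z \<in> {..L div b}" by (simp add: div_le_mono)
  qed
  ultimately have "card {y::nat. y < L \<and> (c + y) mod b = e} \<le> card {..L div b}"
    by (intro card_inj_on_le) simp_all
  then show ?thesis by simp
qed

lemma count_le1: "(b::nat) > 0 \<Longrightarrow> card {z::nat. z < b \<and> (z + r) mod b = l} \<le> 1"
proof -
  assume "b > 0"
  have "\<forall>z1\<in>{z::nat. z < b \<and> (z + r) mod b = l}. \<forall>z2\<in>{z::nat. z < b \<and> (z + r) mod b = l}. z1 = z2"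
  proof (intro ballI)
    fix z1 z2 assume z1: "z1 \<in> {z::nat. z < b \<and> (z + r) mod b = l}" and z2: "z2 \<in> {z::nat. z < b \<and> (z + r) mod b = l}"
    then have "(r + z1) mod b = (r + z2) mod b" by (simp add: ac_simps)
    then have "z1 mod b = z2 mod b" by (rule mod_cancel_nat)
    then show "z1 = z2" using z1 z2 by simp
  qed
  moreover have fin: "finite {z::nat. z < b \<and> (z + r) mod b = l}" by simp
  ultimately show ?thesis unfolding One_nat_def using card_le_Suc0_iff_eq[OF fin] by blast
qed

lemma bern_powr:
  fixes x a :: real
  assumes "0 < x" "0 \<le> a" "a \<le> 1"
  shows "x powr a \<le> 1 + a * (x - 1)"
  using Youngs_inequality_0[of a "1 - a" x 1] assms by (simp add: algebra_simps)

lemma miss_bound: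
  fixes \<phi> :: "'u \<Rightarrow> 'h" and r :: "'u \<Rightarrow> nat"
  assumes fA: "finite A" and fX: "finite X" and XA: "\<phi> ` X \<subseteq> A" and b: "b > 0" and w: "0 < w" "w < b"
    and G: "\<And>v. card {x\<in>X. \<phi> x = v} \<le> w"
  shows "measure_pmf.prob (Pi_pmf A 0 (\<lambda>_. pmf_of_set {..<b})) {g. \<exists>x\<in>X. (g (\<phi> x) + r x) mod b = l}
     \<le> 1 - (1 - real w / real b) powr (real (card X) / real w)"
proof -
  define P where "P = Pi_pmf A 0 (\<lambda>_. pmf_of_set {..<b})"
  define Ev where "Ev = {g. \<exists>x\<in>X. (g (\<phi> x) + r x) mod b = l}"
  define Gs where "Gs = (\<lambda>v. {x\<in>X. \<phi> x = v})"
  define B where "B = (\<lambda>v. {z. z < b \<and> (\<forall>x\<in>Gs v. (z + r x) mod b \<noteq> l)})"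
  define t where "t = real w / real b"
  have t: "0 < 1 - t" "1 - t \<le> 1" using w b by (auto simp: t_def field_simps)
  have sub: "PiE_dflt A 0 B \<subseteq> - Ev"
  proof
    fix g assume g: "g \<in> PiE_dflt A 0 B"
    { fix x assume x: "x \<in> X"
      then have "\<phi> x \<in> A" using XA by auto
      then have "g (\<phi> x) \<in> B (\<phi> x)" using g by (auto simp: PiE_dflt_def)
      then have "(g (\<phi> x) + r x) mod b \<noteq> l" using x by (auto simp: B_def Gs_def) }
    then show "g \<in> - Ev" by (auto simp: Ev_def)
  qed
  have each: "1 - real (card (Gs v)) / real b \<le> measure_pmf.prob (pmf_of_set {..<b}) (B v)" for v
  proof -
    have "{..<b} \<subseteq> B v \<union> (\<Union>x\<in>Gs v. {z. z < b \<and> (z + r x) mod b = l})"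
      by (auto simp: B_def)
    then have "card {..<b} \<le> card (B v \<union> (\<Union>x\<in>Gs v. {z. z < b \<and> (z + r x) mod b = l}))"
      by (intro card_mono) (auto simp: B_def Gs_def fX)
    also have "\<dots> \<le> card (B v) + card (\<Union>x\<in>Gs v. {z. z < b \<and> (z + r x) mod b = l})"
      by (rule card_Un_le)
    also have "card (\<Union>x\<in>Gs v. {z. z < b \<and> (z + r x) mod b = l}) \<le> (\<Sum>x\<in>Gs v. card {z. z < b \<and> (z + r x) mod b = l})"
      by (rule card_UN_le) (auto simp: Gs_def fX)
    also have "\<dots> \<le> (\<Sum>x\<in>Gs v. 1)"
      by (intro sum_mono count_le1 b)
    finally have "b \<le> card (B v) + card (Gs v)" by simp
    moreover have "measure_pmf.prob (pmf_of_set {..<b}) (B v) = card (B v) / b"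
      using b by (subst measure_pmf_of_set) (auto simp: B_def intro!: arg_cong[where f=card])
    ultimately show ?thesis using b by (simp add: field_simps)
  qed
  have pw: "(1 - t) powr (real (card (Gs v)) / real w) \<le> 1 - real (card (Gs v)) / real b" for v
  proof -
    have "(1 - t) powr (real (card (Gs v)) / real w) \<le> 1 + (real (card (Gs v)) / real w) * ((1 - t) - 1)"
      using G[of v] w t by (intro bern_powr) (auto simp: Gs_def)
    also have "\<dots> = 1 - real (card (Gs v)) / real b" using w by (simp add: t_def field_simps)
    finally show ?thesis .
  qed
  have cardX: "(\<Sum>v\<in>A. card (Gs v)) = card X"
  proof -
    have "X = (\<Union>v\<in>A. Gs v)" using XA by (auto simp: Gs_def)
    moreover have "card (\<Union>v\<in>A. Gs v) = (\<Sum>v\<in>A. card (Gs v))"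
      by (rule card_UN_disjoint) (auto simp: fA fX Gs_def)
    ultimately show ?thesis by simp
  qed
  have "(1 - t) powr (real (card X) / real w) = (1 - t) powr (\<Sum>v\<in>A. real (card (Gs v)) / real w)"
  proof -
    have "real (card X) = (\<Sum>v\<in>A. real (card (Gs v)))" by (simp add: cardX[symmetric])
    then show ?thesis by (simp add: sum_divide_distrib)
  qed
  also have "\<dots> = (\<Prod>v\<in>A. (1 - t) powr (real (card (Gs v)) / real w))"
    using t by (intro powr_sum) auto
  also have "\<dots> \<le> (\<Prod>v\<in>A. measure_pmf.prob (pmf_of_set {..<b}) (B v))"
    by (intro prod_mono conjI powr_ge_zero order_trans[OF pw each])
  also have "\<dots> = measure_pmf.prob P (PiE_dflt A 0 B)"
    unfolding P_def by (rule measure_Pi_pmf_PiE_dflt[symmetric]) (rule fA)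
  also have "\<dots> \<le> measure_pmf.prob P (- Ev)"
    by (rule measure_pmf.finite_measure_mono[OF sub]) simp
  also have "\<dots> = 1 - measure_pmf.prob P Ev"
    using measure_pmf.prob_compl[of Ev P] by (simp add: Compl_eq_Diff_UNIV)
  finally show ?thesis unfolding P_def Ev_def t_def by simp
qed

lemma prob_mod_le:
  assumes "L > 0" "b > 0"
  shows "measure_pmf.prob (pmf_of_set {..<L}) {y. (c + y) mod b = e} \<le> 1 / real b + 1 / real L"
proof -
  have "measure_pmf.prob (pmf_of_set {..<L}) {y. (c + y) mod b = e} = card {y. y < L \<and> (c + y) mod b = e} / real L"
    using assms by (subst measure_pmf_of_set) (auto intro!: arg_cong[where f=card])
  also have "\<dots> \<le> real (L div b + 1) / real L"
    using assms count_le[of L c b e] by (intro divide_right_mono) auto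
  also have "\<dots> \<le> 1 / real b + 1 / real L"
  proof -
    have "L div b * b \<le> L" by (rule div_times_less_eq_dividend)
    then have "real (L div b) * real b \<le> real L" by (metis of_nat_le_iff of_nat_mult)
    then have "real (L div b) / real L \<le> 1 / real b" using assms by (simp add: field_simps)
    then show ?thesis by (simp add: add_divide_distrib)
  qed
  finally show ?thesis .
qed

lemma rep_pair:
  fixes Phi :: "('u \<Rightarrow> 'h) pmf"
  assumes "finite S" "q \<in> S" "x \<noteq> q" "b > 0" "L > 0"
  shows "measure_pmf.prob (idl_rep_pmf Phi b L S) {h. idl_hash b h q = idl_hash b h x} \<le> 1 / real b + 1 / real L"
  unfolding idl_rep_pmf_def
proof (rule prob_bind_le, rule prob_bind_le)
  fix \<phi> :: "'u \<Rightarrow> 'h" and \<rho>1 :: "'h \<Rightarrow> nat"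
  have eq: "(Pi_pmf S 0 (\<lambda>_. pmf_of_set {..<L}) \<bind> (\<lambda>\<rho>2. return_pmf (\<phi>, \<rho>1, \<rho>2)))
      = map_pmf (\<lambda>\<rho>2. (\<phi>, \<rho>1, \<rho>2)) (Pi_pmf S 0 (\<lambda>_. pmf_of_set {..<L}))"
    by (simp add: map_pmf_def)
  show "measure_pmf.prob (Pi_pmf S 0 (\<lambda>_. pmf_of_set {..<L}) \<bind> (\<lambda>\<rho>2. return_pmf (\<phi>, \<rho>1, \<rho>2)))
          {h. idl_hash b h q = idl_hash b h x} \<le> 1 / real b + 1 / real L"
    unfolding eq measure_map_pmf
  proof (rule Pi_split_le2[where a=q])
    fix g :: "'u \<Rightarrow> nat"
    have "{y. g(q := y) \<in> (\<lambda>\<rho>2. (\<phi>, \<rho>1, \<rho>2)) -` {h. idl_hash b h q = idl_hash b h x}}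
        = {y. (\<rho>1 (\<phi> q) + y) mod b = (\<rho>1 (\<phi> x) + g x) mod b}"
      using assms by (auto simp: idl_hash_def)
    then show "measure_pmf.prob (pmf_of_set {..<L}) {y. g(q := y) \<in> (\<lambda>\<rho>2. (\<phi>, \<rho>1, \<rho>2)) -` {h. idl_hash b h q = idl_hash b h x}}
        \<le> 1 / real b + 1 / real L"
      using prob_mod_le[OF assms(5,4)] by simp
  qed (use assms in auto)
qed

lemma rep_E0:
  fixes Phi :: "('u \<Rightarrow> 'h) pmf"
  assumes fS: "finite S" and qS: "q \<in> S" and X0S: "X0 \<subseteq> S" and b: "b > 0" and w: "0 < w" "w < b"
    and h\<phi>: "\<And>\<phi> x. \<phi> \<in> set_pmf Phi \<Longrightarrow> x \<in> X0 \<Longrightarrow> \<phi> x \<noteq> \<phi> q"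
    and hg: "\<And>\<phi> v. \<phi> \<in> set_pmf Phi \<Longrightarrow> card {x\<in>X0. \<phi> x = v} \<le> w"
  shows "measure_pmf.prob (idl_rep_pmf Phi b L S) {h. \<exists>x\<in>X0. idl_hash b h q = idl_hash b h x}
    \<le> 1 - (1 - real w / real b) powr (real (card X0) / real w)"
  unfolding idl_rep_pmf_def
proof (rule prob_bind_le)
  fix \<phi> assume \<phi>: "\<phi> \<in> set_pmf Phi"
  define P1 where "P1 = Pi_pmf (\<phi> ` S) 0 (\<lambda>_. pmf_of_set {..<b})"
  define P2 where "P2 = Pi_pmf S 0 (\<lambda>_. pmf_of_set {..<L})"
  have eq: "(P1 \<bind> (\<lambda>\<rho>1. P2 \<bind> (\<lambda>\<rho>2. return_pmf (\<phi>, \<rho>1, \<rho>2))))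
      = P2 \<bind> (\<lambda>\<rho>2. map_pmf (\<lambda>\<rho>1. (\<phi>, \<rho>1, \<rho>2)) P1)"
    by (subst bind_commute_pmf) (simp add: map_pmf_def)
  have fX0: "finite X0" using fS X0S finite_subset by blast
  show "measure_pmf.prob (P1 \<bind> (\<lambda>\<rho>1. P2 \<bind> (\<lambda>\<rho>2. return_pmf (\<phi>, \<rho>1, \<rho>2))))
          {h. \<exists>x\<in>X0. idl_hash b h q = idl_hash b h x} \<le> 1 - (1 - real w / real b) powr (real (card X0) / real w)"
    unfolding eq
  proof (rule prob_bind_le)
    fix \<rho>2
    show "measure_pmf.prob (map_pmf (\<lambda>\<rho>1. (\<phi>, \<rho>1, \<rho>2)) P1) {h. \<exists>x\<in>X0. idl_hash b h q = idl_hash b h x}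
       \<le> 1 - (1 - real w / real b) powr (real (card X0) / real w)"
      unfolding measure_map_pmf P1_def
    proof (rule Pi_split_le[where a="\<phi> q"])
      fix y
      have "{g. g(\<phi> q := y) \<in> (\<lambda>\<rho>1. (\<phi>, \<rho>1, \<rho>2)) -` {h. \<exists>x\<in>X0. idl_hash b h q = idl_hash b h x}}
         = {g. \<exists>x\<in>X0. (g (\<phi> x) + \<rho>2 x) mod b = (y + \<rho>2 q) mod b}"
        using h\<phi>[OF \<phi>] by (auto simp: idl_hash_def; metis)
      also have "measure_pmf.prob (Pi_pmf (\<phi> ` S - {\<phi> q}) 0 (\<lambda>_. pmf_of_set {..<b})) \<dots>
          \<le> 1 - (1 - real w / real b) powr (real (card X0) / real w)"
        by (rule miss_bound) (use fS fX0 X0S h\<phi>[OF \<phi>] b w hg[OF \<phi>] in auto)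
      finally show "measure_pmf.prob (Pi_pmf (\<phi> ` S - {\<phi> q}) 0 (\<lambda>_. pmf_of_set {..<b}))
          {g. g(\<phi> q := y) \<in> (\<lambda>\<rho>1. (\<phi>, \<rho>1, \<rho>2)) -` {h. \<exists>x\<in>X0. idl_hash b h q = idl_hash b h x}}
          \<le> 1 - (1 - real w / real b) powr (real (card X0) / real w)" .
    qed (use fS qS in auto)
  qed
qed

lemma group_card:
  assumes A1: "\<forall>i<length xs. \<forall>j<length xs. w1 \<le> i - j \<or> w1 \<le> j - i \<longrightarrow> zeta Phi (xs ! i) (xs ! j) = 0"
    and GS: "G \<subseteq> set xs" and pos: "\<And>x y. x \<in> G \<Longrightarrow> y \<in> G \<Longrightarrow> zeta Phi x y > 0"
  shows "card G \<le> w1"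
proof (cases "G = {}")
  case True then show ?thesis by simp
next
  case False
  define I where "I = {i. i < length xs \<and> xs ! i \<in> G}"
  have fI: "finite I" by (simp add: I_def)
  have GI: "G \<subseteq> (\<lambda>i. xs ! i) ` I"
  proof
    fix x assume "x \<in> G"
    then obtain i where "i < length xs" "xs ! i = x" using GS by (metis in_set_conv_nth subsetD)
    then show "x \<in> (\<lambda>i. xs ! i) ` I" using \<open>x \<in> G\<close> by (auto simp: I_def)
  qed
  have "card G \<le> card ((\<lambda>i. xs ! i) ` I)" by (rule card_mono) (use fI GI in auto)
  also have "\<dots> \<le> card I" by (rule card_image_le[OF fI])
  finally have cGI: "card G \<le> card I" .
  have "I \<noteq> {}" using False GI by auto
  define i0 where "i0 = Min I"
  have i0: "i0 \<in> I" using Min_in[OF fI \<open>I \<noteq> {}\<close>] by (simp add: i0_def)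
  have "I \<subseteq> {i0..<i0 + w1}"
  proof
    fix j assume j: "j \<in> I"
    have "i0 \<le> j" using Min_le[OF fI j] by (simp add: i0_def)
    moreover have "j < i0 + w1"
    proof (rule ccontr)
      assume "\<not> j < i0 + w1"
      then have "w1 \<le> j - i0" by simp
      then have "zeta Phi (xs ! j) (xs ! i0) = 0" using A1 j i0 by (auto simp: I_def)
      moreover have "zeta Phi (xs ! j) (xs ! i0) > 0" using pos j i0 by (auto simp: I_def)
      ultimately show False by simp
    qed
    ultimately show "j \<in> {i0..<i0 + w1}" by simp
  qed
  then have "card I \<le> card {i0..<i0 + w1}" by (rule card_mono[rotated]) simp
  then show ?thesis using cGI by simp
qed

lemma zeta_self: "zeta Phi x x = 1"
  by (simp add: zeta_def)

lemma zeta_nonneg: "zeta Phi x y \<ge> 0"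
  by (simp add: zeta_def)

theorem theorem2:
  fixes Phi :: "('u \<Rightarrow> 'h) pmf" and m \<eta> L w1 w2 :: nat and xs :: "'u list" and q :: 'u
  assumes "\<eta> > 0" and "L > 0" and "\<eta> dvd m" and "m > 0"
    and "real w1 * real \<eta> \<le> real m"
    and "q \<notin> set xs"
    and A1: "\<forall>i<length xs. \<forall>j<length xs. w1 \<le> i - j \<or> w1 \<le> j - i \<longrightarrow> zeta Phi (xs ! i) (xs ! j) = 0"
    and A2: "card {x \<in> set xs. zeta Phi q x > 0} \<le> w2"
  shows "idl_fp_rate Phi m \<eta> L xs q \<le>
    (real w2 * (1 / real L + real \<eta> / real m)
      + 2 * (1 - (1 - real w1 * real \<eta> / real m) powr (real (length xs) / (2 * real w1)))) ^ \<eta>"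
proof -
  note eta = assms(1) and Lpos = assms(2) and dvd = assms(3) and mpos = assms(4) and w1m = assms(5)
    and qxs = assms(6)
  define b where "b = m div \<eta>"
  have bpos: "b > 0" using eta dvd mpos by (auto simp: b_def elim!: dvdE)
  have rb: "real b = real m / real \<eta>" using dvd eta by (simp add: b_def real_of_nat_div)
  have inv_b: "1 / real b = real \<eta> / real m" using rb by simp
  define t where "t = real w1 * real \<eta> / real m"
  have t_eq: "t = real w1 / real b" using rb eta by (simp add: t_def)
  have t01: "0 \<le> t" "t \<le> 1" using w1m mpos by (auto simp: t_def field_simps)
  have w1b: "w1 \<le> b"
  proof -
    have "real w1 \<le> real b" using t01 t_eq bpos by (simp add: field_simps)
    then show ?thesis by simp
  qed
  define n where "n = length xs"
  define S where "S = insert q (set xs)"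
  have fS: "finite S" by (simp add: S_def)
  define R where "R = idl_rep_pmf Phi b L S"
  define E :: "(('u \<Rightarrow> 'h) \<times> ('h \<Rightarrow> nat) \<times> ('u \<Rightarrow> nat)) set" where "E = {h. idl_hash b h q \<in> idl_hash b h ` set xs}"
  define Xp where "Xp = {x \<in> set xs. zeta Phi q x > 0}"
  define X0 where "X0 = {x \<in> set xs. \<not> zeta Phi q x > 0}"
  define E0 :: "(('u \<Rightarrow> 'h) \<times> ('h \<Rightarrow> nat) \<times> ('u \<Rightarrow> nat)) set" where "E0 = {h. \<exists>x\<in>X0. idl_hash b h q = idl_hash b h x}"
  define Ex :: "'u \<Rightarrow> (('u \<Rightarrow> 'h) \<times> ('h \<Rightarrow> nat) \<times> ('u \<Rightarrow> nat)) set" where "Ex = (\<lambda>x. {h. idl_hash b h q = idl_hash b h x})"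
  define y where "y = (1 - t) powr (real n / (2 * real w1))"
  have y01: "0 \<le> y" "y \<le> 1" using t01 by (auto simp: y_def intro!: powr_le1)

  have fp: "idl_fp_rate Phi m \<eta> L xs q = (measure_pmf.prob R E) ^ \<eta>"
  proof -
    have "{hs. bloom_query m \<eta> hs xs q} = Pi {..<\<eta>} (\<lambda>_. E)"
      by (auto simp: bloom_query_def bloom_bits_def E_def b_def Pi_def)
    then have "idl_fp_rate Phi m \<eta> L xs q = measure_pmf.prob (Pi_pmf {..<\<eta>} undefined (\<lambda>_. R)) (Pi {..<\<eta>} (\<lambda>_. E))"
      by (simp add: idl_fp_rate_def idl_filter_pmf_def R_def b_def S_def)
    also have "\<dots> = (\<Prod>j\<in>{..<\<eta>}. measure_pmf.prob R E)"
      by (rule measure_Pi_pmf_Pi) simp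
    finally show ?thesis by simp
  qed

  have "E \<subseteq> (\<Union>x\<in>Xp. Ex x) \<union> E0"
    by (auto simp: E_def Ex_def E0_def Xp_def X0_def)
  then have "measure_pmf.prob R E \<le> measure_pmf.prob R ((\<Union>x\<in>Xp. Ex x) \<union> E0)"
    by (intro measure_pmf.finite_measure_mono) auto
  also have "\<dots> \<le> measure_pmf.prob R (\<Union>x\<in>Xp. Ex x) + measure_pmf.prob R E0"
    by (rule measure_Un_le) auto
  also have "measure_pmf.prob R (\<Union>x\<in>Xp. Ex x) \<le> (\<Sum>x\<in>Xp. measure_pmf.prob R (Ex x))"
    by (rule measure_pmf.finite_measure_subadditive_finite) (auto simp: Xp_def)
  also have "\<dots> \<le> (\<Sum>x\<in>Xp. 1 / real b + 1 / real L)"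
  proof (rule sum_mono)
    fix x assume "x \<in> Xp"
    then have xq: "x \<noteq> q" using qxs by (auto simp: Xp_def)
    show "measure_pmf.prob R (Ex x) \<le> 1 / real b + 1 / real L"
      unfolding R_def Ex_def by (rule rep_pair[OF fS _ xq bpos Lpos]) (simp add: S_def)
  qed
  also have "\<dots> = real (card Xp) * (1 / real b + 1 / real L)" by simp
  also have "\<dots> \<le> real w2 * (1 / real L + real \<eta> / real m)"
  proof -
    have "real (card Xp) \<le> real w2" using A2 by (simp add: Xp_def)
    then have "real (card Xp) * (1 / real b + 1 / real L) \<le> real w2 * (1 / real b + 1 / real L)"
      by (rule mult_right_mono) simp
    then show ?thesis using inv_b by (simp add: add.commute)
  qed
  finally have part1: "measure_pmf.prob R E \<le> real w2 * (1 / real L + real \<eta> / real m) + measure_pmf.prob R E0"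
    by simp

  have part2: "measure_pmf.prob R E0 \<le> 2 * (1 - y)"
  proof (cases "X0 = {}")
    case True
    then show ?thesis using y01 by (simp add: E0_def)
  next
    case False
    then have "xs \<noteq> []" by (auto simp: X0_def)
    have w1pos: "w1 > 0"
    proof (rule ccontr)
      assume "\<not> w1 > 0"
      then have "zeta Phi (xs ! 0) (xs ! 0) = 0" using A1 \<open>xs \<noteq> []\<close> by auto
      then show False by (simp add: zeta_self)
    qed
    show ?thesis
    proof (cases "w1 = b")
      case True
      then have "t = 1" using t_eq bpos by simp
      then have "y = 0" by (simp add: y_def)
      have "(1::real) \<le> 2 * (1 - y)" using \<open>y = 0\<close> by simp
      then show ?thesis by (intro order_trans[OF measure_pmf.prob_le_1])
    next
      case False
      then have w1b': "w1 < b" using w1b by simp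
      have "real w1 < real b" using w1b' by simp
      then have "t < 1" unfolding t_eq by (simp add: divide_less_eq_1)
      then have ht: "0 < 1 - t" by simp
      have h\<phi>: "\<phi> x \<noteq> \<phi> q" if "\<phi> \<in> set_pmf Phi" "x \<in> X0" for \<phi> x
      proof -
        have "zeta Phi q x = 0" using that(2) zeta_nonneg[of Phi q x] by (auto simp: X0_def)
        then have "set_pmf Phi \<inter> {\<phi>. \<phi> q = \<phi> x} = {}" by (simp add: zeta_def measure_pmf_zero_iff)
        then show ?thesis using that(1) by auto
      qed
      have hg: "card {x\<in>X0. \<phi> x = v} \<le> w1" if "\<phi> \<in> set_pmf Phi" for \<phi> v
      proof (rule group_card[OF A1])
        show "{x \<in> X0. \<phi> x = v} \<subseteq> set xs" by (auto simp: X0_def)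
        fix x z assume "x \<in> {x \<in> X0. \<phi> x = v}" "z \<in> {x \<in> X0. \<phi> x = v}"
        then have "\<phi> \<in> {\<phi>. \<phi> x = \<phi> z}" by auto
        then show "zeta Phi x z > 0" unfolding zeta_def by (rule measure_pmf_posI[OF that])
      qed
      have "measure_pmf.prob R E0 \<le> 1 - (1 - real w1 / real b) powr (real (card X0) / real w1)"
        unfolding R_def E0_def
        by (rule rep_E0) (use fS bpos w1pos w1b' h\<phi> hg in \<open>auto simp: S_def X0_def\<close>)
      also have "\<dots> = 1 - (1 - t) powr (real (card X0) / real w1)" by (simp add: t_eq)
      also have "\<dots> \<le> 1 - (1 - t) powr (real n / real w1)"
      proof -
        have "card X0 \<le> n" unfolding n_def X0_def
          by (rule order_trans[OF card_mono[of "set xs"] card_length]) auto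
        then have "real (card X0) / real w1 \<le> real n / real w1"
          by (intro divide_right_mono) auto
        then show ?thesis using ht t01 by (simp add: powr_mono')
      qed
      also have "(1 - t) powr (real n / real w1) = y * y"
        unfolding y_def by (subst powr_add[symmetric]) (simp add: field_simps)
      also have "1 - y * y \<le> 2 * (1 - y)"
      proof -
        have "0 \<le> (y - 1) * (y - 1)" by simp
        also have "(y - 1) * (y - 1) = 2 * (1 - y) - (1 - y * y)" by (simp add: algebra_simps)
        finally show ?thesis by simp
      qed
      finally show ?thesis .
    qed
  qed

  have main: "measure_pmf.prob R E \<le> real w2 * (1 / real L + real \<eta> / real m) + 2 * (1 - y)"
    using part1 part2 by linarith
  show ?thesis
    unfolding fp
    using main by (intro power_mono) (auto simp: y_def t_def n_def)
qed

end
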